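(* Let $x$ be an element of a commutative ring $R$. The morphism of $R$-complexes $f:\mathcal{L}_x\to\check{C}_x$ given in degree $0$ by $f_0:R[U]\to R$, $r(U)\mapsto r(0)$, and in degree $1$ by $f_1:UR[U]\to R_x$, $r(U)\mapsto r(1/x)$, is a quasi-isomorphism.
   Context: $\mathcal{L}_x$ denotes the $R$-complex $0\to R[U]\xrightarrow{\psi} UR[U]\to 0$ with $R[U]$ in cohomological degree $0$, $UR[U]$ (polynomials without constant term) in degree $1$, and $\psi(r(U))=r(0)-(1-xU)r(U)$. $\check{C}_x$ denotes the complex $0\to R\xrightarrow{\iota_x} R_x\to 0$ in degrees $0,1$, with $\iota_x(r)=r/1$. *)

theory Defs
  imports "HOL-Computational_Algebra.Polynomial"
begin

text \<open>Localization R_x, represented as pairs (a, n) standing for a / x^n,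
  modulo the usual equivalence relation.\<close>
definition loc_eq :: "'a::comm_ring_1 \<Rightarrow> 'a \<times> nat \<Rightarrow> 'a \<times> nat \<Rightarrow> bool" where
  "loc_eq x p q \<longleftrightarrow> (\<exists>k. x ^ k * (x ^ snd q * fst p - x ^ snd p * fst q) = 0)"

definition loc_add :: "'a::comm_ring_1 \<Rightarrow> 'a \<times> nat \<Rightarrow> 'a \<times> nat \<Rightarrow> 'a \<times> nat" where
  "loc_add x p q = (x ^ snd q * fst p + x ^ snd p * fst q, snd p + snd q)"

definition loc_of :: "'a::comm_ring_1 \<Rightarrow> 'a \<times> nat" where
  "loc_of r = (r, 0)"

definition UPoly :: "'a::comm_ring_1 poly set" where
  "UPoly = {p. coeff p 0 = 0}"

definition psi :: "'a::comm_ring_1 \<Rightarrow> 'a poly \<Rightarrow> 'a poly" where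
  "psi x r = [:poly r 0:] - [:1, - x:] * r"

definition f0 :: "'a::comm_ring_1 poly \<Rightarrow> 'a" where
  "f0 r = poly r 0"

text \<open>f_1(r) = r(1/x) = sum_i r_i / x^i, represented as (sum_i r_i x^(d-i)) / x^d, d = degree r\<close>
definition f1 :: "'a::comm_ring_1 \<Rightarrow> 'a poly \<Rightarrow> 'a \<times> nat" where
  "f1 x r = ((\<Sum>i\<le>degree r. coeff r i * x ^ (degree r - i)), degree r)"

end

theory Submission
  imports Defs
begin

definition revx :: "'a::comm_ring_1 \<Rightarrow> nat \<Rightarrow> 'a poly \<Rightarrow> 'a" where
  "revx x D p = (\<Sum>i\<le>D. coeff p i * x ^ (D - i))"

lemma f1_revx: "f1 x p = (revx x (degree p) p, degree p)"
  by (simp add: f1_def revx_def)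

lemma revx_Suc:
  assumes "degree p \<le> D"
  shows "revx x (Suc D) p = x * revx x D p"
proof -
  have "revx x (Suc D) p = (\<Sum>i\<le>D. coeff p i * x ^ (Suc D - i)) + coeff p (Suc D) * x ^ 0"
    by (simp add: revx_def)
  also have "coeff p (Suc D) = 0" using assms by (simp add: coeff_eq_0)
  also have "(\<Sum>i\<le>D. coeff p i * x ^ (Suc D - i)) = (\<Sum>i\<le>D. x * (coeff p i * x ^ (D - i)))"
    by (rule sum.cong) (auto simp: Suc_diff_le mult_ac)
  finally show ?thesis by (simp add: revx_def sum_distrib_left)
qed

lemma revx_shift:
  assumes "degree p \<le> D"
  shows "revx x (D + m) p = x ^ m * revx x D p"
proof (induction m)
  case 0 then show ?case by simp
next
  case (Suc m)
  have "revx x (D + Suc m) p = x * revx x (D + m) p"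
    using revx_Suc[of p "D+m" x] assms by simp
  then show ?case using Suc by simp
qed

lemma revx_add: "revx x D (p + q) = revx x D p + revx x D q"
  by (simp add: revx_def sum.distrib algebra_simps)

lemma revx_diff: "revx x D (p - q) = revx x D p - revx x D q"
  by (simp add: revx_def sum_subtractf algebra_simps)

lemma revx_smult: "revx x D (smult c p) = c * revx x D p"
  by (simp add: revx_def sum_distrib_left mult_ac)

lemma revx_const: "revx x D [:c:] = c * x ^ D"
proof -
  have "revx x D [:c:] = (\<Sum>i\<le>D. if i = 0 then c * x ^ D else 0)"
    unfolding revx_def by (rule sum.cong) (auto simp: coeff_pCons split: nat.splits)
  then show ?thesis by simp
qed

lemma revx_pCons0: "revx x (Suc D) (pCons 0 p) = revx x D p"
  unfolding revx_def by (subst sum.atMost_Suc_shift) simp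

lemma psi_alt: "psi x r = [:poly r 0:] - r + pCons 0 (smult x r)"
  unfolding psi_def by (simp add: algebra_simps smult_add_right)

lemma coeff_psi_0: "coeff (psi x r) 0 = 0"
  by (simp add: psi_alt poly_0_coeff_0)

lemma coeff_psi_Suc: "coeff (psi x r) (Suc i) = x * coeff r i - coeff r (Suc i)"
  by (simp add: psi_alt)

lemma psi_eq_iff:
  "psi x r = s \<longleftrightarrow> coeff s 0 = 0 \<and> (\<forall>i. coeff s (Suc i) = x * coeff r i - coeff r (Suc i))"
proof
  assume "psi x r = s" then show "coeff s 0 = 0 \<and> (\<forall>i. coeff s (Suc i) = x * coeff r i - coeff r (Suc i))"
    using coeff_psi_0 coeff_psi_Suc by metis
next
  assume h: "coeff s 0 = 0 \<and> (\<forall>i. coeff s (Suc i) = x * coeff r i - coeff r (Suc i))"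
  show "psi x r = s"
  proof (rule poly_eqI)
    fix n show "coeff (psi x r) n = coeff s n"
      using h by (cases n) (simp_all add: coeff_psi_0 coeff_psi_Suc)
  qed
qed

lemma degree_psi: "degree (psi x r) \<le> Suc (degree r)"
proof -
  have "degree (pCons 0 (smult x r)) \<le> Suc (degree r)"
    by (metis degree_pCons_le degree_smult_le le_trans Suc_le_mono)
  moreover have "degree ([:poly r 0:] - r) \<le> degree r"
    by (rule degree_diff_le) auto
  ultimately show ?thesis unfolding psi_alt
    by (meson degree_add_le le_SucI)
qed

lemma part1: "loc_eq x (loc_of (f0 r)) (f1 x (psi x r))"
proof -
  let ?n = "degree r" and ?d = "degree (psi x r)"
  have dle: "?d \<le> Suc ?n" by (rule degree_psi)
  have "revx x (Suc ?n) (psi x r) = poly r 0 * x ^ Suc ?n"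
    unfolding psi_alt revx_add revx_diff revx_smult revx_pCons0 revx_const
    using revx_Suc[of r ?n x] by simp
  moreover have "revx x (Suc ?n) (psi x r) = x ^ (Suc ?n - ?d) * revx x ?d (psi x r)"
    using revx_shift[where p="psi x r" and D="?d" and m="Suc ?n - ?d" and x=x] dle by simp
  ultimately have eq: "x ^ (Suc ?n - ?d) * revx x ?d (psi x r) = poly r 0 * x ^ Suc ?n" by simp
  have "x ^ (Suc ?n - ?d) * (x ^ ?d * poly r 0 - revx x ?d (psi x r)) = 0"
    using eq dle by (simp add: algebra_simps power_add[symmetric])
  then show ?thesis
    by (auto simp: loc_eq_def loc_of_def f0_def f1_revx)
qed

lemma ker_coeff:
  assumes "psi x r = 0"
  shows "coeff r i = x ^ i * coeff r 0"
proof (induction i)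
  case 0 then show ?case by simp
next
  case (Suc i)
  have "0 = x * coeff r i - coeff r (Suc i)"
    using coeff_psi_Suc[of x r i] assms by simp
  then show ?case using Suc by (simp add: algebra_simps)
qed

lemma coeff_monsum: "coeff (\<Sum>i<N. monom (c i) i) n = (if n < N then c n else 0)"
  by (simp add: coeff_sum coeff_monom)

lemma part2: "bij_betw f0 {r. psi x r = 0} {a. loc_eq x (loc_of a) (loc_of 0)}"
proof -
  have inj: "inj_on f0 {r. psi x r = 0}"
  proof (rule inj_onI)
    fix r s assume r: "r \<in> {r. psi x r = 0}" and s: "s \<in> {r. psi x r = 0}" and e: "f0 r = f0 s"
    show "r = s"
    proof (rule poly_eqI)
      fix n show "coeff r n = coeff s n"
        using ker_coeff[of x r n] ker_coeff[of x s n] r s e by (simp add: f0_def poly_0_coeff_0)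
    qed
  qed
  have sub: "f0 ` {r. psi x r = 0} \<subseteq> {a. loc_eq x (loc_of a) (loc_of 0)}"
  proof
    fix b assume "b \<in> f0 ` {r. psi x r = 0}"
    then obtain r where r: "psi x r = 0" and b: "b = f0 r" by auto
    have "coeff r (Suc (degree r)) = 0" by (simp add: coeff_eq_0)
    then have "x ^ Suc (degree r) * coeff r 0 = 0" using ker_coeff[OF r] by metis
    then have "\<exists>k. x ^ k * coeff r 0 = 0" by blast
    then show "b \<in> {a. loc_eq x (loc_of a) (loc_of 0)}"
      by (auto simp: b loc_eq_def loc_of_def f0_def poly_0_coeff_0)
  qed
  have sup: "{a. loc_eq x (loc_of a) (loc_of 0)} \<subseteq> f0 ` {r. psi x r = 0}"
  proof
    fix a assume "a \<in> {a. loc_eq x (loc_of a) (loc_of 0)}"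
    then obtain k where k: "x ^ k * a = 0" by (auto simp: loc_eq_def loc_of_def)
    define r where "r = (\<Sum>i<k. monom (x ^ i * a) i)"
    have cr: "coeff r n = (if n < k then x ^ n * a else 0)" for n
      unfolding r_def by (rule coeff_monsum)
    have "psi x r = 0"
      unfolding psi_eq_iff
    proof (intro conjI allI)
      fix i show "coeff 0 (Suc i) = x * coeff r i - coeff r (Suc i)"
      proof (cases "Suc i < k")
        case True then show ?thesis by (simp add: cr)
      next
        case False
        then have "Suc i = k \<or> Suc i > k" by auto
        then show ?thesis using k by (auto simp: cr mult.assoc)
      qed
    qed simp
    moreover have "f0 r = a"
      using k by (cases k) (auto simp: f0_def poly_0_coeff_0 cr)
    ultimately show "a \<in> f0 ` {r. psi x r = 0}" by force
  qed
  show ?thesis unfolding bij_betw_def using inj sub sup by blast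
qed

lemma part3: "\<exists>p\<in>UPoly. \<exists>a. loc_eq x (f1 x p) (loc_add x y (loc_of a))"
proof (cases y)
  case (Pair b n)
  show ?thesis
  proof (cases "n = 0")
    case True
    show ?thesis
      by (rule bexI[of _ 0], rule exI[of _ "-b"])
         (auto simp: Pair True f1_def loc_add_def loc_of_def loc_eq_def UPoly_def)
  next
    case False
    show ?thesis
    proof (cases "b = 0")
      case True
      show ?thesis
        by (rule bexI[of _ 0], rule exI[of _ 0])
           (auto simp: Pair True f1_def loc_add_def loc_of_def loc_eq_def UPoly_def)
    next
      case b: False
      have "f1 x (monom b n) = (b, n)"
      proof -
        have "(\<Sum>i\<le>n. coeff (monom b n) i * x ^ (n - i)) = (\<Sum>i\<le>n. if i = n then b else 0)"
          by (rule sum.cong) (auto simp: coeff_monom)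
        then show ?thesis using b by (simp add: f1_def degree_monom_eq)
      qed
      then show ?thesis using False
        by (intro bexI[of _ "monom b n"] exI[of _ 0])
           (auto simp: Pair loc_add_def loc_of_def loc_eq_def UPoly_def coeff_monom)
    qed
  qed
qed

lemma part4_core:
  assumes s0: "coeff s 0 = 0" and dD: "degree s \<le> D"
    and k: "x ^ k * (revx x D s - x ^ D * a) = 0"
  shows "\<exists>r. psi x r = s"
proof -
  define c where "c i = x ^ i * a - (\<Sum>j\<le>i. x ^ (i - j) * coeff s j)" for i
  have rec: "c (Suc i) = x * c i - coeff s (Suc i)" for i
  proof -
    have "(\<Sum>j\<le>Suc i. x ^ (Suc i - j) * coeff s j) = x * (\<Sum>j\<le>i. x ^ (i - j) * coeff s j) + coeff s (Suc i)"
      by (simp add: sum_distrib_left, rule sum.cong) (auto simp: Suc_diff_le mult_ac)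
    then show ?thesis by (simp add: c_def algebra_simps)
  qed
  have tail: "c (D + m) = x ^ m * c D" for m
  proof (induction m)
    case 0 then show ?case by simp
  next
    case (Suc m)
    have "coeff s (Suc (D + m)) = 0" using dD by (simp add: coeff_eq_0)
    then show ?case using rec[of "D+m"] Suc by simp
  qed
  have cD: "c D = x ^ D * a - revx x D s"
    by (simp add: c_def revx_def mult_ac)
  have cN: "c (D + k) = 0"
    using tail[of k] cD k by (simp add: algebra_simps)
  define r where "r = (\<Sum>i<D + k. monom (c i) i)"
  have cr: "coeff r n = (if n < D + k then c n else 0)" for n
    unfolding r_def by (rule coeff_monsum)
  have "psi x r = s"
    unfolding psi_eq_iff
  proof (intro conjI allI)
    show "coeff s 0 = 0" by (rule s0)
    fix i show "coeff s (Suc i) = x * coeff r i - coeff r (Suc i)"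
    proof (cases "Suc i < D + k")
      case True then show ?thesis using rec[of i] by (simp add: cr)
    next
      case False
      then have "Suc i = D + k \<or> Suc i > D + k" by auto
      then show ?thesis
      proof
        assume e: "Suc i = D + k"
        then show ?thesis using rec[of i] cN by (simp add: cr)
      next
        assume g: "Suc i > D + k"
        then have "coeff s (Suc i) = 0" using dD by (simp add: coeff_eq_0)
        then show ?thesis using g by (simp add: cr)
      qed
    qed
  qed
  then show ?thesis by blast
qed

lemma part4:
  assumes p: "p \<in> UPoly" and q: "q \<in> UPoly"
    and h: "\<exists>a. loc_eq x (f1 x p) (loc_add x (f1 x q) (loc_of a))"
  shows "\<exists>r. p = q + psi x r"
proof -
  obtain a k where ak: "x ^ k * (x ^ degree q * revx x (degree p) p
      - x ^ degree p * (revx x (degree q) q + x ^ degree q * a)) = 0"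
    using h by (auto simp: loc_eq_def loc_add_def loc_of_def f1_revx)
  let ?D = "degree p + degree q"
  have rp: "revx x ?D p = x ^ degree q * revx x (degree p) p"
    using revx_shift[where p=p and D="degree p" and m="degree q" and x=x] by simp
  have rq: "revx x ?D q = x ^ degree p * revx x (degree q) q"
    using revx_shift[where p=q and D="degree q" and m="degree p" and x=x] by (simp add: add.commute)
  have "x ^ k * (revx x ?D (p - q) - x ^ ?D * a) = 0"
    using ak unfolding revx_diff rp rq by (simp add: algebra_simps power_add)
  moreover have "degree (p - q) \<le> ?D"
    by (meson degree_diff_le le_add1 le_add2)
  moreover have "coeff (p - q) 0 = 0" using p q by (simp add: UPoly_def)
  ultimately obtain r where "psi x r = p - q" using part4_core by metis
  then show ?thesis by (intro exI[of _ r]) simp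
qed

theorem lemma3p5:
  fixes x :: "'a::comm_ring_1"
  shows
    \<comment> \<open>f is a morphism of complexes (the square commutes, up to equality in R_x)\<close>
    "(\<forall>r. loc_eq x (loc_of (f0 r)) (f1 x (psi x r)))
     \<comment> \<open>H^0: f_0 restricts to a bijection ker psi -> ker iota_x\<close>
   \<and> bij_betw f0 {r. psi x r = 0} {a. loc_eq x (loc_of a) (loc_of 0)}
     \<comment> \<open>H^1: induced map U R[U] / im psi -> R_x / im iota_x is surjective\<close>
   \<and> (\<forall>y. \<exists>p\<in>UPoly. \<exists>a. loc_eq x (f1 x p) (loc_add x y (loc_of a)))
     \<comment> \<open>H^1: and injective\<close>
   \<and> (\<forall>p\<in>UPoly. \<forall>q\<in>UPoly.
        (\<exists>a. loc_eq x (f1 x p) (loc_add x (f1 x q) (loc_of a)))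
        \<longrightarrow> (\<exists>r. p = q + psi x r))"
  using part1 part2 part3 part4 by blast

end
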